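(* Let $k\in\mathbb{P}$, $b\geq 2$ an integer, and $M\in\mathbb{N}$. Suppose $X'=(x_1',\dots,x_k')$ and $X=(x_1,\dots,x_k)$ are the greedy presentations of integers $r_1,r_2\in\{0,1,\dots,M\}$ respectively. If $X'\preceq X$, then $w(r_1)\leq w(r_2)$.
   Context: $\mathbb{P}$ denotes the positive integers, $\mathbb{N}$ the nonnegative integers. Let $B_i=\frac{b^i-1}{b-1}$ for $1\le i\le k$. The greedy presentation of $N\in\mathbb{N}$ is the tuple $(x_1,\dots,x_k)\in\mathbb{N}^k$ with $\sum_i B_i x_i=N$ obtained by the greedy algorithm (take $x_k$ maximal, then $x_{k-1}$ maximal for the remainder, etc.); equivalently it satisfies $x_k=\lfloor (b-1)N/(b^k-1)\rfloor$, $x_i\in\{0,\dots,b\}$ for $1\le i\le k-1$, and if $2\le i\le k-1$ and $x_i=b$ then $x_1=\cdots=x_{i-1}=0$. The weight of $N$ is $w(N)=\sum_{i=1}^k b^i x_i$ where $(x_i)$ is its greedy presentation. The colexicographic order $\preceq$ on tuples: $(x_1',\dots,x_k')\preceq(x_1,\dots,x_k)$ iff either $x_i'=x_i$ for all $i$, or there is $j$ with $x_j'<x_j$ and $x_i'=x_i$ for all $i>j$. *)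

theory Defs
  imports Main
begin

text \<open>B_i = (b^i - 1)/(b - 1); exact division in nat for b \<ge> 2.\<close>
definition Bnum :: "nat \<Rightarrow> nat \<Rightarrow> nat" where
  "Bnum b i = (b ^ i - 1) div (b - 1)"

text \<open>Greedy algorithm: take x_i maximal (i = k down to 1) for the remainder.
  Tuples are functions nat \<Rightarrow> nat, meaningful on indices 1..k (0 elsewhere).\<close>
fun greedy_aux :: "nat \<Rightarrow> nat \<Rightarrow> nat \<Rightarrow> (nat \<Rightarrow> nat)" where
  "greedy_aux b 0 N = (\<lambda>_. 0)"
| "greedy_aux b (Suc i) N =
     (greedy_aux b i (N mod Bnum b (Suc i)))(Suc i := N div Bnum b (Suc i))"

definition greedy_pres :: "nat \<Rightarrow> nat \<Rightarrow> nat \<Rightarrow> (nat \<Rightarrow> nat)" where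
  "greedy_pres b k N = greedy_aux b k N"

definition weight :: "nat \<Rightarrow> nat \<Rightarrow> nat \<Rightarrow> nat" where
  "weight b k N = (\<Sum>i=1..k. b ^ i * greedy_pres b k N i)"

definition colex_le :: "nat \<Rightarrow> (nat \<Rightarrow> nat) \<Rightarrow> (nat \<Rightarrow> nat) \<Rightarrow> bool" where
  "colex_le k x' x \<longleftrightarrow>
     (\<forall>i\<in>{1..k}. x' i = x i) \<or>
     (\<exists>j\<in>{1..k}. x' j < x j \<and> (\<forall>i\<in>{j<..k}. x' i = x i))"

end

theory Submission imports Defs begin
lemma geo: "(b - 1) * (\<Sum>l<i. b ^ l) = b ^ i - (1::nat)" if "b \<ge> 1"
proof (induction i)
  case 0 then show ?case by simp
next
  case (Suc i)
  have "(b - 1) * (\<Sum>l<Suc i. b ^ l) = (b - 1) * b ^ i + (b ^ i - 1)"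
    using Suc by (simp add: distrib_left)
  also have "\<dots> = b ^ Suc i - 1"
  proof -
    have "b ^ i \<ge> 1" using that by simp
    then show ?thesis using that by (simp add: diff_mult_distrib algebra_simps)
  qed
  finally show ?case .
qed

lemma Bnum_sum: "b \<ge> 2 \<Longrightarrow> Bnum b i = (\<Sum>l<i. b ^ l)"
proof -
  assume "b \<ge> 2"
  then have "b - 1 \<noteq> 0" by simp
  then show ?thesis unfolding Bnum_def using geo[of b i] \<open>b \<ge> 2\<close>
    by (metis nonzero_mult_div_cancel_left one_le_numeral order_trans)
qed

lemma Bnum_Suc: "b \<ge> 2 \<Longrightarrow> Bnum b (Suc i) = b * Bnum b i + 1"
proof -
  assume b: "b \<ge> 2"
  have "(\<Sum>l<Suc i. b ^ l) = b * (\<Sum>l<i. b ^ l) + 1"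
    unfolding sum.lessThan_Suc_shift by (simp add: sum_distrib_left)
  then show ?thesis using b by (simp add: Bnum_sum)
qed
lemma Bnum_pos: "b \<ge> 2 \<Longrightarrow> Bnum b (Suc i) \<ge> 1"
  by (simp add: Bnum_Suc)

lemma g_out: "l = 0 \<or> l > i \<Longrightarrow> greedy_aux b i N l = 0"
  by (induction i arbitrary: N) auto

definition W :: "nat \<Rightarrow> nat \<Rightarrow> nat \<Rightarrow> nat" where
  "W b i N = (\<Sum>l=1..i. b ^ l * greedy_aux b i N l)"

lemma W_Suc: "W b (Suc i) N = b ^ Suc i * (N div Bnum b (Suc i)) + W b i (N mod Bnum b (Suc i))"
proof -
  have "W b (Suc i) N = (\<Sum>l=1..i. b ^ l * greedy_aux b (Suc i) N l) + b ^ Suc i * (N div Bnum b (Suc i))"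
    unfolding W_def by simp
  also have "(\<Sum>l=1..i. b ^ l * greedy_aux b (Suc i) N l) = W b i (N mod Bnum b (Suc i))"
    unfolding W_def by (intro sum.cong) auto
  finally show ?thesis by simp
qed

lemma W_0: "W b i 0 = 0"
  unfolding W_def by (induction i) (auto intro: sum.neutral)

lemma W_zero_arg: "greedy_aux b i 0 = (\<lambda>_. 0)"
  by (induction i) auto

lemma W_bound: "b \<ge> 2 \<Longrightarrow> N < Bnum b (Suc i) \<Longrightarrow> W b i N \<le> b ^ Suc i"
proof (induction i arbitrary: N)
  case 0 then show ?case by (simp add: W_def)
next
  case (Suc i)
  let ?B = "Bnum b (Suc i)"
  have Bp: "?B \<ge> 1" using Suc.prems Bnum_pos by blast
  have NB: "N < b * ?B + 1" using Suc.prems Bnum_Suc by simp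
  have q: "N div ?B \<le> b"
  proof -
    have "N \<le> b * ?B" using NB by simp
    then have "N div ?B \<le> (b * ?B) div ?B" by (rule div_le_mono)
    then show ?thesis using Bp by simp
  qed
  have IH: "W b i (N mod ?B) \<le> b ^ Suc i" using Suc.IH Suc.prems Bp by simp
  show ?case
  proof (cases "N div ?B = b")
    case True
    have "N div ?B * ?B + N mod ?B = N" by (rule div_mult_mod_eq)
    then have "N mod ?B = 0" using NB True by simp
    then show ?thesis using True by (simp add: W_Suc W_0)
  next
    case False
    then have "N div ?B \<le> b - 1" using q by simp
    then have A: "b ^ Suc i * (N div ?B) \<le> b ^ Suc i * (b - 1)" by (rule mult_le_mono2)
    have C: "W b (Suc i) N = b ^ Suc i * (N div ?B) + W b i (N mod ?B)" by (rule W_Suc)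
    have "b ^ Suc i * (b - 1) + b ^ Suc i = b ^ Suc (Suc i)"
    proof -
      obtain c where "b = Suc c" using Suc.prems by (cases b) auto
      then show ?thesis by simp
    qed
    then show ?thesis using IH A C by linarith
  qed
qed

lemma main:
  assumes "b \<ge> 2"
  shows "((\<forall>l\<in>{1..i}. greedy_aux b i N1 l = greedy_aux b i N2 l) \<or>
     (\<exists>j\<in>{1..i}. greedy_aux b i N1 j < greedy_aux b i N2 j \<and>
        (\<forall>l\<in>{j<..i}. greedy_aux b i N1 l = greedy_aux b i N2 l)))
   \<Longrightarrow> W b i N1 \<le> W b i N2"
proof (induction i arbitrary: N1 N2)
  case 0 then show ?case by (simp add: W_def)
next
  case (Suc i)
  let ?B = "Bnum b (Suc i)"
  have Bp: "?B \<ge> 1" using assms Bnum_pos by blast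
  show ?case
  proof (cases "\<forall>l\<in>{1..Suc i}. greedy_aux b (Suc i) N1 l = greedy_aux b (Suc i) N2 l")
    case True
    then have t: "N1 div ?B = N2 div ?B" using True[rule_format, of "Suc i"] by simp
    have "W b i (N1 mod ?B) = W b i (N2 mod ?B)" unfolding W_def
    proof (intro sum.cong refl)
      fix l assume "l \<in> {1..i}"
      then show "b ^ l * greedy_aux b i (N1 mod ?B) l = b ^ l * greedy_aux b i (N2 mod ?B) l"
        using True[rule_format, of l] by simp
    qed
    then show ?thesis using t by (simp add: W_Suc)
  next
    case False
    with Suc.prems obtain j where j: "j \<in> {1..Suc i}" "greedy_aux b (Suc i) N1 j < greedy_aux b (Suc i) N2 j"
      "\<forall>l\<in>{j<..Suc i}. greedy_aux b (Suc i) N1 l = greedy_aux b (Suc i) N2 l" by blast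
    show ?thesis
    proof (cases "j = Suc i")
      case True
      then have lt: "N1 div ?B < N2 div ?B" using j by simp
      have "W b i (N1 mod ?B) \<le> b ^ Suc i"
        using W_bound[OF assms] Bp by simp
      then have "W b (Suc i) N1 \<le> b ^ Suc i * (N1 div ?B) + b ^ Suc i" by (simp add: W_Suc)
      also have "\<dots> = b ^ Suc i * (N1 div ?B + 1)" by simp
      also have "\<dots> \<le> b ^ Suc i * (N2 div ?B)" using lt by (intro mult_le_mono2) simp
      also have "\<dots> \<le> W b (Suc i) N2" by (simp add: W_Suc)
      finally show ?thesis .
    next
      case False
      then have jle: "j \<in> {1..i}" using j by auto
      have top: "N1 div ?B = N2 div ?B" using j(3) jle
        using j(3)[rule_format, of "Suc i"] by simp
      have "W b i (N1 mod ?B) \<le> W b i (N2 mod ?B)"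
      proof (rule Suc.IH, rule disjI2, rule bexI[OF _ jle], intro conjI ballI)
        show "greedy_aux b i (N1 mod ?B) j < greedy_aux b i (N2 mod ?B) j"
          using j(2) jle by simp
        fix l assume "l \<in> {j<..i}"
        then show "greedy_aux b i (N1 mod ?B) l = greedy_aux b i (N2 mod ?B) l"
          using j(3)[rule_format, of l] by simp
      qed
      then show ?thesis using top by (simp add: W_Suc)
    qed
  qed
qed

theorem lemma3p4:
  fixes k b M r1 r2 :: nat and X' X :: "nat \<Rightarrow> nat"
  assumes "k \<ge> 1" and "b \<ge> 2"
    and "r1 \<in> {0..M}" and "r2 \<in> {0..M}"
    and "X' = greedy_pres b k r1" and "X = greedy_pres b k r2"
    and "colex_le k X' X"
  shows "weight b k r1 \<le> weight b k r2"
proof -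
  have "W b k r1 \<le> W b k r2"
    using main[OF assms(2), of k r1 r2] assms(5-7) unfolding colex_le_def greedy_pres_def by blast
  then show ?thesis unfolding weight_def W_def greedy_pres_def .
qed

end
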